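(* Let $K\subseteq\mathbb{R}^n$ be a proper cone and let $A\in\mathbb{R}^{n\times n}$ be $K$-monotone. Let $A=U-V$ be a $K$-regular splitting. Let $U=F-G=\overline{F}-\overline{G}$ be two $K$-weak regular splittings of type II of $U$ such that $VF^{-1}G=GF^{-1}V$ and $V\overline{F}^{-1}\overline{G}=\overline{G}\,\overline{F}^{-1}V$. For a positive integer $s$ define $$T_{s}=(F^{-1}G)^{s}+\sum_{j=0}^{s-1}(F^{-1}G)^{j}F^{-1}V,\qquad \overline{T}_{s}=(\overline{F}^{-1}\overline{G})^{s}+\sum_{j=0}^{s-1}(\overline{F}^{-1}\overline{G})^{j}\overline{F}^{-1}V,$$ $$\widehat{\overline{T}}_{s}=(\overline{G}\,\overline{F}^{-1})^{s}+\sum_{j=0}^{s-1}(\overline{G}\,\overline{F}^{-1})^{j}V\overline{F}^{-1},$$ and let $\overline{P}_s$ be the matrix with $\overline{P}_s^{-1}=\sum_{j=0}^{s-1}(\overline{F}^{-1}\overline{G})^j\overline{F}^{-1}$. Suppose that (i) $\widehat{\overline{T}}_s\overline{P}_s\geq_K 0$ for every positive integer $s$, (ii) $F^{-1}\geq_K\overline{F}^{-1}$, (iii) $\overline{F}^{-1}\overline{G}\geq_K 0$. Then $\rho(T_s)\leq\rho(\overline{T}_s)<1$.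
   Context: A proper cone $K\subseteq\mathbb{R}^n$ is a closed, convex, pointed, solid cone. For $M\in\mathbb{R}^{n\times n}$, $M\geq_K 0$ means $MK\subseteq K$, and $M\geq_K N$ means $M-N\geq_K0$. A matrix $A$ is $K$-monotone if $A$ is nonsingular and $A^{-1}\geq_K 0$. A splitting $A=U-V$ (with $U$ nonsingular) is $K$-regular if $U^{-1}\geq_K 0$ and $V\geq_K 0$; it is a $K$-weak regular splitting of type II if $U^{-1}\geq_K 0$ and $VU^{-1}\geq_K 0$. $\rho$ denotes spectral radius. *)

theory Defs
  imports "HOL-Analysis.Analysis"
begin

definition proper_cone :: "(real ^ 'n) set \<Rightarrow> bool" where
  "proper_cone K \<longleftrightarrow> cone K \<and> convex K \<and> closed K \<and>
     K \<inter> uminus ` K = {0} \<and> interior K \<noteq> {}"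

definition K_nonneg :: "(real ^ 'n) set \<Rightarrow> real ^ 'n ^ 'n \<Rightarrow> bool" where
  "K_nonneg K M \<longleftrightarrow> (\<forall>x\<in>K. M *v x \<in> K)"

definition K_ge :: "(real ^ 'n) set \<Rightarrow> real ^ 'n ^ 'n \<Rightarrow> real ^ 'n ^ 'n \<Rightarrow> bool" where
  "K_ge K M N \<longleftrightarrow> K_nonneg K (M - N)"

definition K_monotone :: "(real ^ 'n) set \<Rightarrow> real ^ 'n ^ 'n \<Rightarrow> bool" where
  "K_monotone K A \<longleftrightarrow> invertible A \<and> K_nonneg K (matrix_inv A)"

definition K_regular_splitting ::
  "(real ^ 'n) set \<Rightarrow> real ^ 'n ^ 'n \<Rightarrow> real ^ 'n ^ 'n \<Rightarrow> real ^ 'n ^ 'n \<Rightarrow> bool" where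
  "K_regular_splitting K A U V \<longleftrightarrow> A = U - V \<and> invertible U \<and>
     K_nonneg K (matrix_inv U) \<and> K_nonneg K V"

definition K_weak_regular_splitting_II ::
  "(real ^ 'n) set \<Rightarrow> real ^ 'n ^ 'n \<Rightarrow> real ^ 'n ^ 'n \<Rightarrow> real ^ 'n ^ 'n \<Rightarrow> bool" where
  "K_weak_regular_splitting_II K A U V \<longleftrightarrow> A = U - V \<and> invertible U \<and>
     K_nonneg K (matrix_inv U) \<and> K_nonneg K (V ** matrix_inv U)"

fun matpow :: "'a::semiring_1 ^ 'n ^ 'n \<Rightarrow> nat \<Rightarrow> 'a ^ 'n ^ 'n" where
  "matpow M 0 = mat 1"
| "matpow M (Suc k) = matpow M k ** M"

definition complexify :: "real ^ 'n ^ 'n \<Rightarrow> complex ^ 'n ^ 'n" where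
  "complexify M = (\<chi> i j. complex_of_real (M $ i $ j))"

definition eigenvalues_C :: "real ^ 'n ^ 'n \<Rightarrow> complex set" where
  "eigenvalues_C M = {c. det (mat c - complexify M) = 0}"

definition spectral_radius :: "real ^ 'n ^ 'n \<Rightarrow> real" where
  "spectral_radius M = Max (cmod ` eigenvalues_C M)"

end

theory Submission
  imports Defs "Jordan_Normal_Form.Spectral_Radius"
begin

hide_const (open) Matrix.mat Matrix.vec Matrix.row Matrix.col Determinant.det Spectral_Radius.spectral_radius Spectral_Radius.spectrum
no_notation Matrix.vec_index (infixl "$" 100)

definition toJ :: "(nat \<Rightarrow> 'n::finite) \<Rightarrow> 'a::semiring_1^'n^'n \<Rightarrow> 'a Matrix.mat" where
  "toJ e M = Matrix.mat CARD('n) CARD('n) (\<lambda>(i,j). M $ e i $ e j)"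

lemma sum_bij_nat:
  assumes e: "bij_betw e {..<CARD('n)} (UNIV::'n::finite set)"
  shows "(\<Sum>k\<in>{0..<CARD('n)}. h (e k)) = (\<Sum>j\<in>UNIV. h j)"
proof -
  have "(\<Sum>j\<in>UNIV. h j) = sum (h \<circ> e) {..<CARD('n)}"
    using sum.reindex_bij_betw[OF e, of h] by simp
  then show ?thesis by (simp add: atLeast0LessThan)
qed

lemma toJ_mult:
  assumes e: "bij_betw e {..<CARD('n)} (UNIV::'n::finite set)"
  shows "toJ e ((M::'a::semiring_1^'n^'n) ** N) = toJ e M * toJ e N"
proof (rule eq_matI)
  fix i j assume i: "i < dim_row (toJ e M * toJ e N)" and j: "j < dim_col (toJ e M * toJ e N)"
  then have i': "i < CARD('n)" and j': "j < CARD('n)" by (auto simp: toJ_def)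
  have "(toJ e M * toJ e N) $$ (i,j) = (\<Sum>k\<in>{0..<CARD('n)}. M $ e i $ e k * N $ e k $ e j)"
    using i' j' by (simp add: toJ_def scalar_prod_def)
  also have "\<dots> = (\<Sum>k\<in>UNIV. M $ e i $ k * N $ k $ e j)"
    by (rule sum_bij_nat[OF e, where h="\<lambda>k. M $ e i $ k * N $ k $ e j"])
  also have "\<dots> = toJ e (M ** N) $$ (i,j)"
    using i' j' by (simp add: toJ_def matrix_matrix_mult_def)
  finally show "toJ e (M ** N) $$ (i, j) = (toJ e M * toJ e N) $$ (i, j)" by simp
qed (auto simp: toJ_def)

lemma toJ_one:
  assumes e: "bij_betw e {..<CARD('n)} (UNIV::'n::finite set)"
  shows "toJ e (mat 1 :: 'a::semiring_1^'n^'n) = 1\<^sub>m CARD('n)"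
proof (rule eq_matI)
  fix i j assume "i < dim_row (1\<^sub>m CARD('n) :: 'a Matrix.mat)" "j < dim_col (1\<^sub>m CARD('n) :: 'a Matrix.mat)"
  then have i: "i < CARD('n)" and j: "j < CARD('n)" by auto
  have "(e i = e j) = (i = j)" using e i j unfolding bij_betw_def inj_on_def by auto
  then show "toJ e (mat 1 :: 'a::semiring_1^'n^'n) $$ (i, j) = 1\<^sub>m CARD('n) $$ (i, j)"
    using i j by (simp add: toJ_def Finite_Cartesian_Product.mat_def)
qed (auto simp: toJ_def)

lemma toJ_pow:
  assumes e: "bij_betw e {..<CARD('n)} (UNIV::'n::finite set)"
  shows "toJ e (matpow (M::'a::semiring_1^'n^'n) k) = toJ e M ^\<^sub>m k"
proof (induction k)
  case 0
  then show ?case using toJ_one[OF e] by (simp add: toJ_def)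
next
  case (Suc k)
  then show ?case by (simp add: toJ_mult[OF e])
qed

lemma complexify_mult: "complexify (A ** B) = complexify A ** complexify B"
  by (simp add: complexify_def matrix_matrix_mult_def Finite_Cartesian_Product.vec_eq_iff)

lemma complexify_one: "complexify (mat 1) = mat 1"
  by (simp add: complexify_def Finite_Cartesian_Product.mat_def Finite_Cartesian_Product.vec_eq_iff)

lemma complexify_pow: "complexify (matpow M k) = matpow (complexify M) k"
  by (induction k) (simp_all add: complexify_one complexify_mult)

lemma mat_mult_vec: "(mat c :: 'a::comm_ring_1^'n^'n) *v w = c *s w"
proof -
  have "(\<Sum>j\<in>UNIV. (if i = j then c else 0) * w $ j) = c * w $ i" for i
  proof -
    have "(\<Sum>j\<in>UNIV. (if i = j then c else 0) * w $ j) = (\<Sum>j\<in>UNIV. if i = j then c * w $ j else 0)"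
      by (rule sum.cong) auto
    then show ?thesis by simp
  qed
  then show ?thesis
    by (simp add: Finite_Cartesian_Product.vec_eq_iff matrix_vector_mult_def Finite_Cartesian_Product.mat_def)
qed

lemma ev_iff:
  "c \<in> eigenvalues_C M \<longleftrightarrow> (\<exists>w. w \<noteq> 0 \<and> complexify M *v w = c *s w)"
proof -
  let ?B = "mat c - complexify M"
  have "det ?B \<noteq> 0 \<longleftrightarrow> inj ((*v) ?B)"
    using det_nz_iff_inj_gen[of "(*v) ?B"] by simp
  also have "\<dots> \<longleftrightarrow> (\<forall>w. ?B *v w = 0 \<longrightarrow> w = 0)"
  proof
    assume "inj ((*v) ?B)" then show "\<forall>w. ?B *v w = 0 \<longrightarrow> w = 0"
      by (metis injD matrix_vector_mult_0_right)
  next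
    assume h: "\<forall>w. ?B *v w = 0 \<longrightarrow> w = 0"
    show "inj ((*v) ?B)"
    proof (rule injI)
      fix x y assume "?B *v x = ?B *v y"
      then have "?B *v (x - y) = 0" by (simp add: matrix_vector_mult_diff_distrib)
      then show "x = y" using h by auto
    qed
  qed
  finally have 1: "det ?B = 0 \<longleftrightarrow> (\<exists>w. w \<noteq> 0 \<and> ?B *v w = 0)" by blast
  have 2: "?B *v w = c *s w - complexify M *v w" for w
    by (simp add: matrix_vector_mult_diff_rdistrib mat_mult_vec)
  show ?thesis unfolding eigenvalues_C_def using 1 2 by auto
qed

definition toV :: "(nat \<Rightarrow> 'n::finite) \<Rightarrow> 'a^'n \<Rightarrow> 'a Matrix.vec" where
  "toV e w = Matrix.vec CARD('n) (\<lambda>i. w $ e i)"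

lemma toJ_toV:
  assumes e: "bij_betw e {..<CARD('n)} (UNIV::'n::finite set)"
  shows "toJ e (B::'a::semiring_1^'n^'n) *\<^sub>v toV e w = toV e (B *v w)"
proof (rule eq_vecI)
  fix i assume "i < dim_vec (toV e (B *v w))"
  then have i: "i < CARD('n)" by (simp add: toV_def)
  have "Matrix.vec_index (toJ e B *\<^sub>v toV e w) i = (\<Sum>k\<in>{0..<CARD('n)}. B $ e i $ e k * w $ e k)"
    using i by (simp add: toJ_def toV_def scalar_prod_def)
  also have "\<dots> = (\<Sum>k\<in>UNIV. B $ e i $ k * w $ k)"
    by (rule sum_bij_nat[OF e, where h="\<lambda>k. B $ e i $ k * w $ k"])
  also have "\<dots> = Matrix.vec_index (toV e (B *v w)) i"
    using i by (simp add: toV_def matrix_vector_mult_def)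
  finally show "Matrix.vec_index (toJ e B *\<^sub>v toV e w) i = Matrix.vec_index (toV e (B *v w)) i" .
qed (simp add: toJ_def toV_def)

lemma toV_smult: "toV e (c *s w) = c \<cdot>\<^sub>v toV e w"
  by (rule eq_vecI) (auto simp: toV_def)

lemma toV_inj:
  assumes e: "bij_betw e {..<CARD('n)} (UNIV::'n::finite set)"
  and h: "toV e (x::'a^'n) = toV e y"
  shows "x = y"
proof -
  have "x $ j = y $ j" for j
  proof -
    obtain i where i: "i < CARD('n)" "e i = j" using e unfolding bij_betw_def by (metis UNIV_I imageE lessThan_iff)
    have "Matrix.vec_index (toV e x) i = Matrix.vec_index (toV e y) i" using h by simp
    then show ?thesis using i by (simp add: toV_def)
  qed
  then show ?thesis by (simp add: Finite_Cartesian_Product.vec_eq_iff)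
qed

lemma toV_surj:
  assumes e: "bij_betw e {..<CARD('n)} (UNIV::'n::finite set)"
  and v: "v \<in> carrier_vec CARD('n)"
  shows "\<exists>w::'a^'n. toV e w = v"
proof -
  let ?w = "\<chi> j. Matrix.vec_index v (inv_into {..<CARD('n)} e j)"
  have "toV e ?w = v"
  proof (rule eq_vecI)
    fix i assume "i < dim_vec v"
    then have i: "i < CARD('n)" using v by simp
    have "inv_into {..<CARD('n)} e (e i) = i"
      using e i by (simp add: bij_betw_def inv_into_f_f)
    then show "Matrix.vec_index (toV e ?w) i = Matrix.vec_index v i" using i by (simp add: toV_def)
  qed (use v in \<open>simp add: toV_def\<close>)
  then show ?thesis by blast
qed

lemma toV_zero: "toV e (0::'a::zero^'n::finite) = 0\<^sub>v CARD('n)"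
  by (rule eq_vecI) (auto simp: toV_def)

lemma spectrum_eq:
  assumes e: "bij_betw e {..<CARD('n)} (UNIV::'n::finite set)"
  shows "eigenvalues_C (M::real^'n^'n) = Spectral_Radius.spectrum (toJ e (complexify M))"
proof -
  let ?J = "toJ e (complexify M)"
  have dJ: "dim_row ?J = CARD('n)" by (simp add: toJ_def)
  have "c \<in> eigenvalues_C M \<longleftrightarrow> eigenvalue ?J c" for c
  proof
    assume "c \<in> eigenvalues_C M"
    then obtain w where w: "w \<noteq> 0" "complexify M *v w = c *s w" using ev_iff by blast
    have "toV e w \<noteq> toV e 0" using toV_inj[OF e, of w 0] w(1) by blast
    then have "toV e w \<noteq> 0\<^sub>v CARD('n)" by (simp add: toV_zero)
    moreover have "?J *\<^sub>v toV e w = c \<cdot>\<^sub>v toV e w"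
      using toJ_toV[OF e] w(2) toV_smult by metis
    ultimately have "eigenvector ?J (toV e w) c"
      unfolding eigenvector_def dJ by (simp add: toV_def)
    then show "eigenvalue ?J c" unfolding eigenvalue_def by blast
  next
    assume "eigenvalue ?J c"
    then obtain v where v: "eigenvector ?J v c" unfolding eigenvalue_def by blast
    then have vc: "v \<in> carrier_vec CARD('n)" and v0: "v \<noteq> 0\<^sub>v CARD('n)" and ev: "?J *\<^sub>v v = c \<cdot>\<^sub>v v"
      unfolding eigenvector_def dJ by auto
    obtain w where w: "toV e w = v" using toV_surj[OF e vc] by blast
    have "toV e (complexify M *v w) = toV e (c *s w)"
      using ev w toJ_toV[OF e] toV_smult by metis
    then have "complexify M *v w = c *s w" using toV_inj[OF e] by blast
    moreover have "w \<noteq> 0" using v0 w toV_zero by metis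
    ultimately show "c \<in> eigenvalues_C M" using ev_iff by blast
  qed
  then show ?thesis unfolding Spectral_Radius.spectrum_def by auto
qed

lemma ex_enum: "\<exists>e. bij_betw e {..<CARD('n)} (UNIV::'n::finite set)"
  using ex_bij_betw_nat_finite[of "UNIV::'n set"] by (auto simp: atLeast0LessThan)

lemma J_carrier: "toJ e (M::'a::semiring_1^'n::finite^'n) \<in> carrier_mat CARD('n) CARD('n)"
  by (simp add: toJ_def)

lemma eig_finite: "finite (eigenvalues_C (M::real^'n::finite^'n))"
  using ex_enum[where 'n='n] spectrum_eq card_finite_spectrum(1)[OF J_carrier] by metis

lemma eig_nonempty: "eigenvalues_C (M::real^'n::finite^'n) \<noteq> {}"
  using ex_enum[where 'n='n] spectrum_eq spectrum_non_empty[OF J_carrier] by (metis zero_less_card_finite)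

lemma sr_ge: "c \<in> eigenvalues_C M \<Longrightarrow> cmod c \<le> spectral_radius M"
  unfolding Defs.spectral_radius_def using eig_finite[of M] by (auto intro!: Max_ge)

lemma sr_le: "(\<And>c. c \<in> eigenvalues_C M \<Longrightarrow> cmod c \<le> r) \<Longrightarrow> spectral_radius M \<le> r"
  unfolding Defs.spectral_radius_def using eig_finite[of M] eig_nonempty[of M] by (simp add: Max_le_iff)

lemma sr_less: "(\<And>c. c \<in> eigenvalues_C M \<Longrightarrow> cmod c < r) \<Longrightarrow> spectral_radius M < r"
  unfolding Defs.spectral_radius_def using eig_finite[of M] eig_nonempty[of M] by (simp add: Max_less_iff)

lemma sr_nonneg: "0 \<le> spectral_radius M"
  using eig_nonempty sr_ge norm_ge_zero order_trans by blast

lemma gelfand_bound: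
  assumes "spectral_radius (M::real^'n::finite^'n) < 1"
  shows "\<exists>C. \<forall>k i j. \<bar>matpow M k $ i $ j\<bar> \<le> C"
proof -
  obtain e where e: "bij_betw e {..<CARD('n)} (UNIV::'n set)" using ex_enum by blast
  let ?J = "toJ e (complexify M)"
  have "Spectral_Radius.spectral_radius ?J = spectral_radius M"
    unfolding Spectral_Radius.spectral_radius_def Defs.spectral_radius_def spectrum_eq[OF e, symmetric] by simp
  then obtain C where C: "\<forall>k. norm_bound (?J ^\<^sub>m k) C"
    using spectral_radius_jnf_norm_bound_less_1_upper_triangular[OF J_carrier] assms by metis
  have "\<bar>matpow M k $ i $ j\<bar> \<le> C" for k i j
  proof -
    obtain a where a: "a < CARD('n)" "e a = i" using e unfolding bij_betw_def by (metis UNIV_I imageE lessThan_iff)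
    obtain b where b: "b < CARD('n)" "e b = j" using e unfolding bij_betw_def by (metis UNIV_I imageE lessThan_iff)
    have "?J ^\<^sub>m k = toJ e (complexify (matpow M k))"
      by (simp add: toJ_pow[OF e] complexify_pow)
    then have "norm (toJ e (complexify (matpow M k)) $$ (a,b)) \<le> C"
      using C a b unfolding norm_bound_def by (metis J_carrier carrier_matD pow_mat_dim_square)
    then show ?thesis using a b by (simp add: toJ_def complexify_def)
  qed
  then show ?thesis by blast
qed

lemma mvec_scal: "(P::complex^'n^'n) *v (c *s w) = c *s (P *v w)"
  by (simp add: Finite_Cartesian_Product.vec_eq_iff matrix_vector_mult_def sum_distrib_left mult.left_commute)

lemma ev_pow:
  assumes "complexify M *v w = c *s w"
  shows "complexify (matpow M k) *v w = c ^ k *s w"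
proof (induction k)
  case 0
  then show ?case by (simp add: complexify_one)
next
  case (Suc k)
  have "complexify (matpow M (Suc k)) *v w = complexify (matpow M k) *v (complexify M *v w)"
    by (simp add: complexify_mult matrix_vector_mul_assoc)
  also have "\<dots> = c *s (c ^ k *s w)" using assms Suc by (simp add: mvec_scal)
  finally show ?case by (simp add: mult.commute)
qed

definition Rev :: "complex^'n \<Rightarrow> real^'n" where "Rev w = (\<chi> i. Re (w $ i))"
definition Imv :: "complex^'n \<Rightarrow> real^'n" where "Imv w = (\<chi> i. Im (w $ i))"

lemma complexify_split:
  "(complexify N *v w) $ i = complex_of_real ((N *v Rev w) $ i) + \<i> * complex_of_real ((N *v Imv w) $ i)"
proof -
  have "(complexify N *v w) $ i = (\<Sum>j\<in>UNIV. complex_of_real (N $ i $ j) * w $ j)"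
    by (simp add: complexify_def matrix_vector_mult_def)
  also have "\<dots> = (\<Sum>j\<in>UNIV. complex_of_real (N $ i $ j * Re (w $ j)) + \<i> * complex_of_real (N $ i $ j * Im (w $ j)))"
  proof (rule sum.cong)
    fix j
    have "w $ j = complex_of_real (Re (w $ j)) + \<i> * complex_of_real (Im (w $ j))"
      by (simp add: complex_eq)
    then show "complex_of_real (N $ i $ j) * w $ j = complex_of_real (N $ i $ j * Re (w $ j)) + \<i> * complex_of_real (N $ i $ j * Im (w $ j))"
      by (metis (no_types, lifting) distrib_left mult.left_commute of_real_mult)
  qed simp
  also have "\<dots> = complex_of_real ((N *v Rev w) $ i) + \<i> * complex_of_real ((N *v Imv w) $ i)"
    by (simp add: Rev_def Imv_def matrix_vector_mult_def sum.distrib sum_distrib_left)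
  finally show ?thesis .
qed

lemma pow_tendsto_zero_imp:
  fixes z :: complex
  assumes "(\<lambda>k. z ^ k) \<longlonglongrightarrow> 0"
  shows "cmod z < 1"
proof (rule ccontr)
  assume "\<not> cmod z < 1"
  then have "1 \<le> cmod (z ^ k)" for k by (simp add: norm_power one_le_power)
  moreover have "(\<lambda>k. cmod (z ^ k)) \<longlonglongrightarrow> 0" using tendsto_norm[OF assms] by simp
  ultimately have "1 \<le> (0::real)" by (meson LIMSEQ_le_const)
  then show False by simp
qed

lemma decay_ev:
  assumes mu: "0 < \<mu>"
  and dec: "\<And>x. (\<lambda>k. (1 / \<mu> ^ k) *\<^sub>R (matpow (M::real^'n::finite^'n) k *v x)) \<longlonglongrightarrow> 0"
  and c: "c \<in> eigenvalues_C M"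
  shows "cmod c < \<mu>"
proof -
  obtain w where w: "w \<noteq> 0" "complexify M *v w = c *s w" using c ev_iff by blast
  obtain i where wi: "w $ i \<noteq> 0" using w(1) by (metis Finite_Cartesian_Product.vec_eq_iff zero_index)
  let ?m = "complex_of_real \<mu>"
  have eq: "(c / ?m) ^ k * w $ i = complex_of_real (((1 / \<mu> ^ k) *\<^sub>R (matpow M k *v Rev w)) $ i)
      + \<i> * complex_of_real (((1 / \<mu> ^ k) *\<^sub>R (matpow M k *v Imv w)) $ i)" for k
  proof -
    have "(c / ?m) ^ k * w $ i = complex_of_real (1 / \<mu> ^ k) * (complexify (matpow M k) *v w) $ i"
      using ev_pow[OF w(2), of k] by (simp add: power_divide)
    also have "\<dots> = complex_of_real (1 / \<mu> ^ k) * (complex_of_real ((matpow M k *v Rev w) $ i) + \<i> * complex_of_real ((matpow M k *v Imv w) $ i))"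
      by (simp add: complexify_split)
    also have "\<dots> = complex_of_real (((1 / \<mu> ^ k) *\<^sub>R (matpow M k *v Rev w)) $ i)
      + \<i> * complex_of_real (((1 / \<mu> ^ k) *\<^sub>R (matpow M k *v Imv w)) $ i)"
      by (simp add: algebra_simps)
    finally show ?thesis .
  qed
  have t1: "(\<lambda>k. complex_of_real (((1 / \<mu> ^ k) *\<^sub>R (matpow M k *v Rev w)) $ i)) \<longlonglongrightarrow> 0"
    using tendsto_of_real[OF tendsto_vec_nth[OF dec[of "Rev w"], where i=i]] unfolding zero_index of_real_0 .
  have t2: "(\<lambda>k. complex_of_real (((1 / \<mu> ^ k) *\<^sub>R (matpow M k *v Imv w)) $ i)) \<longlonglongrightarrow> 0"
    using tendsto_of_real[OF tendsto_vec_nth[OF dec[of "Imv w"], where i=i]] unfolding zero_index of_real_0 .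
  have "(\<lambda>k. (c / ?m) ^ k * w $ i) \<longlonglongrightarrow> 0"
    unfolding eq using tendsto_add[OF t1 tendsto_mult[OF tendsto_const t2]] by simp
  then have "(\<lambda>k. ((c / ?m) ^ k * w $ i) / w $ i) \<longlonglongrightarrow> 0 / w $ i"
    by (intro tendsto_divide) (auto simp: wi)
  then have "(\<lambda>k. (c / ?m) ^ k) \<longlonglongrightarrow> 0" using wi by simp
  then have "cmod (c / ?m) < 1" by (rule pow_tendsto_zero_imp)
  then show ?thesis using mu by (simp add: norm_divide)
qed


lemma matpow_scaleR: "matpow (t *\<^sub>R (M::real^'n::finite^'n)) k = (t ^ k) *\<^sub>R matpow M k"
proof (induction k)
  case 0
  then show ?case by simp
next
  case (Suc k)
  then show ?case by (simp add: matrix_scalar_ac scalar_matrix_assoc[symmetric] mult.commute)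
qed

lemma gelfand:
  assumes sr: "spectral_radius (M::real^'n::finite^'n) < \<mu>"
  shows "(\<lambda>k. (1 / \<mu> ^ k) *\<^sub>R (matpow M k *v x)) \<longlonglongrightarrow> 0"
proof -
  define r where "r = spectral_radius M"
  have r0: "0 \<le> r" unfolding r_def by (rule sr_nonneg)
  define m where "m = (r + \<mu>) / 2"
  have m0: "0 < m" and rm: "r < m" and mmu: "m < \<mu>" using sr r0 unfolding m_def r_def by auto
  define N where "N = (1 / m) *\<^sub>R M"
  have "spectral_radius N < 1"
  proof (rule sr_less)
    fix c assume "c \<in> eigenvalues_C N"
    then obtain w where w: "w \<noteq> 0" "complexify N *v w = c *s w" using ev_iff by blast
    have "complexify M *v w = complex_of_real m *s (complexify N *v w)"
      using m0 by (simp add: N_def complexify_def Finite_Cartesian_Product.vec_eq_iff matrix_vector_mult_def sum_distrib_left mult.assoc)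
    then have "complexify M *v w = (complex_of_real m * c) *s w"
      using w(2) by (simp add: Finite_Cartesian_Product.vec_eq_iff mult.assoc)
    then have "complex_of_real m * c \<in> eigenvalues_C M" using w(1) ev_iff by blast
    then have "cmod (complex_of_real m * c) \<le> r" unfolding r_def by (rule sr_ge)
    then have h: "m * cmod c \<le> r" using m0 by (simp add: norm_mult)
    have "m * cmod c < m * 1" using h rm by linarith
    then show "cmod c < 1" using m0 mult_less_cancel_left_pos by blast
  qed
  then obtain C where C: "\<And>k i j. \<bar>matpow N k $ i $ j\<bar> \<le> C" using gelfand_bound by blast
  define B where "B = (\<Sum>i\<in>(UNIV::'n set). (\<Sum>j\<in>UNIV. C * \<bar>x $ j\<bar>))"
  have bnd: "norm (matpow N k *v x) \<le> B" for k
  proof -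
    have "\<bar>(matpow N k *v x) $ i\<bar> \<le> (\<Sum>j\<in>UNIV. C * \<bar>x $ j\<bar>)" for i
    proof -
      have "\<bar>(matpow N k *v x) $ i\<bar> = \<bar>\<Sum>j\<in>UNIV. matpow N k $ i $ j * x $ j\<bar>"
        by (simp add: matrix_vector_mult_def)
      also have "\<dots> \<le> (\<Sum>j\<in>UNIV. \<bar>matpow N k $ i $ j * x $ j\<bar>)" by (rule sum_abs)
      also have "\<dots> \<le> (\<Sum>j\<in>UNIV. C * \<bar>x $ j\<bar>)"
        by (rule sum_mono) (simp add: abs_mult C mult_right_mono)
      finally show ?thesis .
    qed
    then have "(\<Sum>i\<in>UNIV. \<bar>(matpow N k *v x) $ i\<bar>) \<le> B" unfolding B_def by (rule sum_mono)
    then show ?thesis using norm_le_l1_cart order_trans by blast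
  qed
  have eqk: "(1 / \<mu> ^ k) *\<^sub>R (matpow M k *v x) = (m / \<mu>) ^ k *\<^sub>R (matpow N k *v x)" for k
  proof -
    have "matpow N k = (1 / m) ^ k *\<^sub>R matpow M k" unfolding N_def by (rule matpow_scaleR)
    then have "(m / \<mu>) ^ k *\<^sub>R (matpow N k *v x) = ((m / \<mu>) ^ k * (1 / m) ^ k) *\<^sub>R (matpow M k *v x)"
      by (simp add: scaleR_matrix_vector_assoc[symmetric])
    also have "(m / \<mu>) ^ k * (1 / m) ^ k = 1 / \<mu> ^ k"
      using m0 by (simp add: power_divide)
    finally show ?thesis by simp
  qed
  have g: "(\<lambda>k. (m / \<mu>) ^ k * B) \<longlonglongrightarrow> 0"
    using m0 mmu by (intro tendsto_mult_left_zero LIMSEQ_power_zero) simp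
  show ?thesis unfolding eqk
  proof (rule Lim_null_comparison[OF _ g], rule always_eventually, rule allI)
    fix k
    have "norm ((m / \<mu>) ^ k *\<^sub>R (matpow N k *v x)) = (m / \<mu>) ^ k * norm (matpow N k *v x)"
      using m0 mmu by simp
    also have "\<dots> \<le> (m / \<mu>) ^ k * B" using bnd m0 mmu by (intro mult_left_mono) auto
    finally show "norm ((m / \<mu>) ^ k *\<^sub>R (matpow N k *v x)) \<le> (m / \<mu>) ^ k * B" .
  qed
qed



lemma pc_cc: "proper_cone K \<Longrightarrow> convex K \<and> cone K"
  unfolding proper_cone_def by simp

lemma pc_add: "proper_cone K \<Longrightarrow> x \<in> K \<Longrightarrow> y \<in> K \<Longrightarrow> x + y \<in> K"
  using pc_cc convex_cone by metis

lemma pc_scale: "proper_cone K \<Longrightarrow> x \<in> K \<Longrightarrow> 0 \<le> c \<Longrightarrow> c *\<^sub>R x \<in> K"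
  using pc_cc convex_cone by metis

lemma pc_nonempty: assumes "proper_cone K" shows "K \<noteq> {}"
proof -
  have "interior K \<noteq> {}" using assms unfolding proper_cone_def by simp
  then show ?thesis using interior_subset[of K] by auto
qed

lemma pc_zero: assumes "proper_cone K" shows "0 \<in> K"
proof -
  obtain x where "x \<in> K" using pc_nonempty[OF assms] by blast
  then have "0 *\<^sub>R x \<in> K" using pc_scale[OF assms] by blast
  then show ?thesis by simp
qed

lemma pc_pointed: assumes "proper_cone K" "x \<in> K" "- x \<in> K" shows "x = 0"
proof -
  have "x = - (- x)" by simp
  then have "x \<in> uminus ` K" using assms(3) by (rule image_eqI)
  then have "x \<in> K \<inter> uminus ` K" using assms(2) by blast
  moreover have "K \<inter> uminus ` K = {0}" using assms(1) unfolding proper_cone_def by simp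
  ultimately show ?thesis by simp
qed

lemma pc_closed: "proper_cone K \<Longrightarrow> closed K"
  unfolding proper_cone_def by simp

lemma pc_sum: assumes "proper_cone K" "finite S" "\<And>i. i \<in> S \<Longrightarrow> f i \<in> K" shows "sum f S \<in> K"
  using assms(2,3)
proof (induction S rule: finite_induct)
  case empty
  then show ?case using pc_zero[OF assms(1)] by simp
next
  case (insert x F)
  have "f x \<in> K" using insert.prems by simp
  moreover have "sum f F \<in> K" using insert by simp
  ultimately show ?case using insert.hyps pc_add[OF assms(1)] by simp
qed

lemma pc_span:
  assumes K: "proper_cone K"
  shows "\<exists>p q. p \<in> K \<and> q \<in> K \<and> y = p - q"
proof (cases "y = 0")
  case True
  then show ?thesis using pc_zero[OF K] by force
next
  case False
  have "interior K \<noteq> {}" using K unfolding proper_cone_def by simp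
  then obtain x0 where x0: "x0 \<in> interior K" by blast
  then obtain e where e0: "e > 0" "ball x0 e \<subseteq> interior K"
    using open_contains_ball_eq[OF open_interior] by blast
  then have e: "e > 0" "ball x0 e \<subseteq> K" using interior_subset by blast+
  define t where "t = e / (2 * norm y)"
  have t: "t > 0" using e False by (simp add: t_def)
  have "dist x0 (x0 + t *\<^sub>R y) < e" using e False by (simp add: dist_norm t_def)
  then have p: "x0 + t *\<^sub>R y \<in> K" using e by auto
  have q: "x0 \<in> K" using x0 interior_subset by blast
  have "y = (1/t) *\<^sub>R (x0 + t *\<^sub>R y) - (1/t) *\<^sub>R x0" using t by (simp add: algebra_simps)
  moreover have "(1/t) *\<^sub>R (x0 + t *\<^sub>R y) \<in> K" using p t pc_scale[OF K] by simp
  moreover have "(1/t) *\<^sub>R x0 \<in> K" using q t pc_scale[OF K] by simp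
  ultimately show ?thesis by blast
qed

lemma pc_functional:
  assumes K: "proper_cone K"
  shows "\<exists>a b. b > 0 \<and> (\<forall>x\<in>K. b * norm x \<le> inner a x)"
proof -
  define S where "S = K \<inter> sphere 0 1"
  have cS: "compact S" unfolding S_def using pc_closed[OF K] by (simp add: closed_Int_compact)
  define T where "T = convex hull S"
  have cT: "compact T" unfolding T_def using cS by (rule compact_convex_hull)
  have 0: "0 \<notin> T"
  proof
    assume "0 \<in> T"
    then obtain s u where s: "finite s" "s \<subseteq> S" "\<forall>x\<in>s. 0 \<le> u x" "sum u s = 1"
      "(\<Sum>v\<in>s. u v *\<^sub>R v) = 0"
      unfolding T_def convex_hull_explicit by blast
    have "\<exists>v0\<in>s. u v0 > 0"
    proof (rule ccontr)
      assume "\<not> (\<exists>v0\<in>s. u v0 > 0)"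
      then have "\<forall>v\<in>s. u v = 0" using s(3) by (meson antisym not_less)
      then have "sum u s = 0" by simp
      then show False using s(4) by simp
    qed
    then obtain v0 where v0: "v0 \<in> s" "u v0 > 0" by blast
    have sK: "\<And>v. v \<in> s \<Longrightarrow> v \<in> K" using s(2) unfolding S_def by blast
    have "(\<Sum>v\<in>s. u v *\<^sub>R v) = u v0 *\<^sub>R v0 + (\<Sum>v\<in>s - {v0}. u v *\<^sub>R v)"
      using s(1) v0(1) by (simp add: sum.remove)
    then have eq: "- (u v0 *\<^sub>R v0) = (\<Sum>v\<in>s - {v0}. u v *\<^sub>R v)" using s(5) by (simp only: neg_eq_iff_add_eq_0)
    have "(\<Sum>v\<in>s - {v0}. u v *\<^sub>R v) \<in> K"
    proof (rule pc_sum[OF K])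
      show "finite (s - {v0})" using s(1) by simp
    next
      fix v assume v: "v \<in> s - {v0}"
      then have "v \<in> K" "0 \<le> u v" using sK s(3) by auto
      then show "u v *\<^sub>R v \<in> K" using pc_scale[OF K] by blast
    qed
    moreover have "u v0 *\<^sub>R v0 \<in> K" using v0 sK pc_scale[OF K] by simp
    ultimately have "u v0 *\<^sub>R v0 = 0" using eq pc_pointed[OF K] by metis
    then have "v0 = 0" using v0 by simp
    moreover have "norm v0 = 1" using v0 s(2) unfolding S_def by auto
    ultimately show False by simp
  qed
  have cvT: "convex T" unfolding T_def by (rule convex_convex_hull)
  obtain a b where ab: "b > 0" "\<forall>x\<in>T. inner a x > b"
    using separating_hyperplane_closed_0[OF cvT compact_imp_closed[OF cT] 0] by blast
  have "b * norm x \<le> inner a x" if x: "x \<in> K" for x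
  proof (cases "x = 0")
    case True
    then show ?thesis by simp
  next
    case False
    have "(1 / norm x) *\<^sub>R x \<in> S" unfolding S_def using False x pc_scale[OF K x] by simp
    then have "(1 / norm x) *\<^sub>R x \<in> T" unfolding T_def by (rule hull_inc)
    then have "inner a ((1 / norm x) *\<^sub>R x) > b" using ab by blast
    then have "inner a x / norm x > b" by (simp add: divide_inverse_commute)
    then have "b * norm x < inner a x" using False by (simp add: pos_less_divide_eq mult.commute)
    then show ?thesis by simp
  qed
  then show ?thesis using ab by blast
qed

lemma pc_sandwich:
  assumes K: "proper_cone K"
  and pK: "\<And>k. p k \<in> K" and qp: "\<And>k. q k - p k \<in> K"
  and q: "q \<longlonglongrightarrow> 0"
  shows "p \<longlonglongrightarrow> 0"
proof -
  obtain a b where ab: "b > 0" "\<forall>x\<in>K. b * norm x \<le> inner a x" using pc_functional[OF K] by blast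
  have "norm (p k) \<le> (norm a / b) * norm (q k)" for k
  proof -
    have "b * norm (p k) \<le> inner a (p k)" using ab pK by blast
    also have "inner a (p k) \<le> inner a (q k)"
    proof -
      have "0 \<le> b * norm (q k - p k)" using ab by simp
      also have "\<dots> \<le> inner a (q k - p k)" using ab qp by blast
      finally show ?thesis by (simp add: inner_diff_right)
    qed
    also have "\<dots> \<le> norm a * norm (q k)" by (rule norm_cauchy_schwarz)
    finally have "b * norm (p k) \<le> norm a * norm (q k)" .
    then have "norm (p k) \<le> (norm a * norm (q k)) / b"
      using ab(1) by (simp add: pos_le_divide_eq mult.commute)
    then show ?thesis by simp
  qed
  then have ev: "\<forall>\<^sub>F k in sequentially. norm (p k) \<le> (norm a / b) * norm (q k)" by simp
  have "(\<lambda>k. (norm a / b) * norm (q k)) \<longlonglongrightarrow> 0"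
    using tendsto_mult_right_zero[OF tendsto_norm_zero[OF q], of "norm a / b"] by simp
  then show ?thesis by (rule Lim_null_comparison[OF ev])
qed

lemma pc_series:
  assumes K: "proper_cone K"
  and aK: "\<And>k. a k \<in> K" and bnd: "\<And>m. B - (\<Sum>k<m. a k) \<in> K"
  shows "a \<longlonglongrightarrow> 0"
proof -
  obtain c b where ab: "b > 0" "\<forall>x\<in>K. b * norm x \<le> inner c x" using pc_functional[OF K] by blast
  have nn: "0 \<le> inner c (a k)" for k
  proof -
    have "b * norm (a k) \<le> inner c (a k)" using ab aK[of k] by blast
    moreover have "0 \<le> b * norm (a k)" using ab by simp
    ultimately show ?thesis by linarith
  qed
  have "(\<Sum>k<m. inner c (a k)) \<le> inner c B" for m
  proof -
    have "b * norm (B - (\<Sum>k<m. a k)) \<le> inner c (B - (\<Sum>k<m. a k))" using ab bnd[of m] by blast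
    moreover have "0 \<le> b * norm (B - (\<Sum>k<m. a k))" using ab by simp
    ultimately have "0 \<le> inner c (B - (\<Sum>k<m. a k))" by linarith
    then show ?thesis by (simp add: inner_diff_right inner_sum_right)
  qed
  then have "summable (\<lambda>k. inner c (a k))" using nn by (intro summableI_nonneg_bounded) auto
  then have z: "(\<lambda>k. inner c (a k)) \<longlonglongrightarrow> 0" by (rule summable_LIMSEQ_zero)
  have "norm (a k) \<le> (1 / b) * inner c (a k)" for k
  proof -
    have "b * norm (a k) \<le> inner c (a k)" using ab aK[of k] by blast
    then have "norm (a k) \<le> inner c (a k) / b" using ab(1) by (simp add: pos_le_divide_eq mult.commute)
    then show ?thesis by simp
  qed
  then have ev: "\<forall>\<^sub>F k in sequentially. norm (a k) \<le> (1 / b) * inner c (a k)" by simp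
  have "(\<lambda>k. (1 / b) * inner c (a k)) \<longlonglongrightarrow> 0" using tendsto_mult_right_zero[OF z, of "1/b"] by simp
  then show ?thesis by (rule Lim_null_comparison[OF ev])
qed

lemma pc_lift:
  assumes K: "proper_cone K"
  and h: "\<And>x. x \<in> K \<Longrightarrow> (\<lambda>k. L k *v x) \<longlonglongrightarrow> 0"
  shows "(\<lambda>k. L k *v y) \<longlonglongrightarrow> 0"
proof -
  obtain p q where pq: "p \<in> K" "q \<in> K" "y = p - q" using pc_span[OF K] by blast
  have "(\<lambda>k. L k *v p - L k *v q) \<longlonglongrightarrow> 0 - 0" using h pq by (intro tendsto_diff) auto
  then show ?thesis using pq by (simp add: matrix_vector_mult_diff_distrib)
qed



lemma mm_add_r: "((A::real^'n^'n) + B) ** C = A ** C + B ** C"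
  by (simp add: Finite_Cartesian_Product.vec_eq_iff matrix_matrix_mult_def sum.distrib algebra_simps)
lemma mm_add_l: "(A::real^'n^'n) ** (B + C) = A ** B + A ** C"
  by (rule matrix_add_ldistrib)
lemma mm_diff_r: "((A::real^'n^'n) - B) ** C = A ** C - B ** C"
  by (simp add: Finite_Cartesian_Product.vec_eq_iff matrix_matrix_mult_def sum_subtractf algebra_simps)
lemma mm_diff_l: "(A::real^'n^'n) ** (B - C) = A ** B - A ** C"
  by (simp add: Finite_Cartesian_Product.vec_eq_iff matrix_matrix_mult_def sum_subtractf algebra_simps)
lemma mm_zero_r: "(A::real^'n^'n) ** 0 = 0"
  by (simp add: Finite_Cartesian_Product.vec_eq_iff matrix_matrix_mult_def)
lemma mm_zero_l: "0 ** (A::real^'n^'n) = 0"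
  by (simp add: Finite_Cartesian_Product.vec_eq_iff matrix_matrix_mult_def)

lemma mm_sum_l: "(A::real^'n^'n) ** sum (f::'i \<Rightarrow> real^'n^'n) S = (\<Sum>i\<in>S. A ** f i)"
proof (induction S rule: infinite_finite_induct)
  case (infinite S) then show ?case by (simp add: mm_zero_r)
next
  case empty then show ?case by (simp add: mm_zero_r)
next
  case (insert x F) then show ?case by (simp add: mm_add_l)
qed

lemma mm_sum_r: "sum (f::'i \<Rightarrow> real^'n^'n) S ** (A::real^'n^'n) = (\<Sum>i\<in>S. f i ** A)"
proof (induction S rule: infinite_finite_induct)
  case (infinite S) then show ?case by (simp add: mm_zero_l)
next
  case empty then show ?case by (simp add: mm_zero_l)
next
  case (insert x F) then show ?case by (simp add: mm_add_r)
qed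

lemma mv_sum: "sum f S *v (x::real^'n) = (\<Sum>i\<in>S. f i *v x)"
proof (induction S rule: infinite_finite_induct)
  case (infinite S) then show ?case by simp
next
  case empty then show ?case by simp
next
  case (insert x F) then show ?case by (simp add: matrix_vector_mult_add_rdistrib)
qed

lemma inv_props:
  assumes "invertible (M::real^'n^'n)"
  shows "M ** matrix_inv M = mat 1" "matrix_inv M ** M = mat 1"
proof -
  have "\<exists>N. M ** N = mat 1 \<and> N ** M = mat 1" using assms unfolding invertible_def .
  then have "M ** matrix_inv M = mat 1 \<and> matrix_inv M ** M = mat 1"
    unfolding matrix_inv_def by (rule someI_ex)
  then show "M ** matrix_inv M = mat 1" "matrix_inv M ** M = mat 1" by auto
qed

lemma matpow_intertwine:
  assumes "P ** Q = Q ** (R::real^'n^'n)"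
  shows "matpow P j ** Q = Q ** matpow R j"
proof (induction j)
  case 0 then show ?case by simp
next
  case (Suc j)
  have "matpow P (Suc j) ** Q = matpow P j ** (P ** Q)" by (simp add: matrix_mul_assoc)
  also have "\<dots> = (matpow P j ** Q) ** R" using assms by (simp add: matrix_mul_assoc)
  also have "\<dots> = Q ** matpow R (Suc j)" using Suc by (simp add: matrix_mul_assoc)
  finally show ?case .
qed

lemma matpow_comm: "(X::real^'n^'n) ** matpow X k = matpow X k ** X"
  using matpow_intertwine[of X X X k] by simp

lemma matpow_add: "matpow (X::real^'n^'n) (a + b) = matpow X a ** matpow X b"
  by (induction b) (simp_all add: matrix_mul_assoc)

lemma tele_r: "(\<Sum>j<m. matpow (X::real^'n^'n) j ** (mat 1 - X)) = mat 1 - matpow X m"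
  by (induction m) (simp_all add: mm_diff_l)

lemma tele_l: "(\<Sum>j<m. (mat 1 - (X::real^'n^'n)) ** matpow X j) = mat 1 - matpow X m"
  by (induction m) (simp_all add: mm_diff_r matpow_comm)

lemma inv_of_inj:
  assumes "\<And>v. (M::real^'n^'n) *v v = 0 \<Longrightarrow> v = 0"
  shows "invertible M"
proof -
  have "inj ((*v) M)"
  proof (rule injI)
    fix x y assume "M *v x = M *v y"
    then have "M *v (x - y) = 0" by (simp add: matrix_vector_mult_diff_distrib)
    then have "x - y = 0" using assms by blast
    then show "x = y" by simp
  qed
  then have "det M \<noteq> 0" using det_nz_iff_inj_gen[of "(*v) M"] by simp
  then show ?thesis by (simp add: invertible_det_nz)
qed

lemma nn_mult: "K_nonneg K A \<Longrightarrow> K_nonneg K B \<Longrightarrow> K_nonneg K (A ** B)"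
  unfolding K_nonneg_def by (simp add: matrix_vector_mul_assoc[symmetric])

lemma nn_add: "proper_cone K \<Longrightarrow> K_nonneg K A \<Longrightarrow> K_nonneg K B \<Longrightarrow> K_nonneg K (A + B)"
  unfolding K_nonneg_def by (simp add: matrix_vector_mult_add_rdistrib pc_add)

lemma nn_sum: assumes "proper_cone K" "finite S" "\<And>i. i \<in> S \<Longrightarrow> K_nonneg K (f i)"
  shows "K_nonneg K (sum f S)"
  unfolding K_nonneg_def
proof
  fix x assume x: "x \<in> K"
  have "sum f S *v x = (\<Sum>i\<in>S. f i *v x)" by (rule mv_sum)
  also have "\<dots> \<in> K" using assms x by (intro pc_sum) (auto simp: K_nonneg_def)
  finally show "sum f S *v x \<in> K" .
qed

lemma nn_one: "K_nonneg K (mat 1)"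
  unfolding K_nonneg_def by simp

lemma nn_zero: "proper_cone K \<Longrightarrow> K_nonneg K 0"
  unfolding K_nonneg_def by (simp add: pc_zero)

lemma nn_matpow: "K_nonneg K X \<Longrightarrow> K_nonneg K (matpow X k)"
  by (induction k) (simp_all add: nn_one nn_mult)

lemma nn_trans: assumes "proper_cone K" "K_nonneg K (A - B)" "K_nonneg K (B - C)"
  shows "K_nonneg K (A - C)"
proof -
  have "A - C = (A - B) + (B - C)" by simp
  then show ?thesis using nn_add[OF assms] by metis
qed

lemma decay:
  assumes K: "proper_cone K" and X: "K_nonneg K X" and Z: "K_nonneg K Z"
  and bnd: "\<And>m. K_nonneg K (B - (\<Sum>k<m. matpow X k ** Z))"
  and XZW: "X = Z ** W"
  shows "(\<lambda>k. matpow X k *v y) \<longlonglongrightarrow> 0"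
proof -
  have h1: "(\<lambda>k. (matpow X k ** Z) *v x) \<longlonglongrightarrow> 0" if x: "x \<in> K" for x
  proof (rule pc_series[OF K, where B="B *v x"])
    fix k show "(matpow X k ** Z) *v x \<in> K"
      using nn_mult[OF nn_matpow[OF X] Z] x unfolding K_nonneg_def by blast
  next
    fix m
    have "B *v x - (\<Sum>k<m. (matpow X k ** Z) *v x) = (B - (\<Sum>k<m. matpow X k ** Z)) *v x"
      by (simp add: mv_sum matrix_vector_mult_diff_rdistrib)
    then show "B *v x - (\<Sum>k<m. (matpow X k ** Z) *v x) \<in> K"
      using bnd[of m] x unfolding K_nonneg_def by simp
  qed
  have h2: "(\<lambda>k. (matpow X k ** Z) *v y') \<longlonglongrightarrow> 0" for y'
    by (rule pc_lift[OF K h1])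
  have "matpow X (Suc k) *v y = (matpow X k ** Z) *v (W *v y)" for k
    using XZW by (simp add: matrix_vector_mul_assoc matrix_mul_assoc)
  then have "(\<lambda>k. matpow X (Suc k) *v y) \<longlonglongrightarrow> 0" using h2[of "W *v y"] by simp
  then show ?thesis by (rule LIMSEQ_imp_Suc)
qed



lemma eig_similar:
  assumes A: "invertible (A::real^'n::finite^'n)" and AT: "A ** T = X ** A"
  shows "eigenvalues_C T \<subseteq> eigenvalues_C X"
proof
  fix c assume "c \<in> eigenvalues_C T"
  then obtain w where w: "w \<noteq> 0" "complexify T *v w = c *s w" using ev_iff by blast
  let ?v = "complexify A *v w"
  have "complexify X *v ?v = complexify (X ** A) *v w" by (simp add: complexify_mult matrix_vector_mul_assoc)
  also have "\<dots> = complexify A *v (complexify T *v w)" by (simp add: AT[symmetric] complexify_mult matrix_vector_mul_assoc)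
  also have "\<dots> = c *s ?v" using w(2) by (simp add: mvec_scal)
  finally have ev: "complexify X *v ?v = c *s ?v" .
  have "complexify (matrix_inv A) *v ?v = w"
    by (simp add: matrix_vector_mul_assoc complexify_mult[symmetric] inv_props(2)[OF A] complexify_one)
  then have "?v \<noteq> 0" using w(1) by auto
  then show "c \<in> eigenvalues_C X" using ev ev_iff by blast
qed

theorem theorem3p11:
  fixes K :: "(real ^ 'n) set"
    and A U V F G Fb Gb :: "real ^ 'n ^ 'n"
    and s :: nat
  assumes K: "proper_cone K"
    and Amon: "K_monotone K A"
    and regUV: "K_regular_splitting K A U V"
    and wFG: "K_weak_regular_splitting_II K U F G"
    and wFGb: "K_weak_regular_splitting_II K U Fb Gb"
    and comm1: "V ** matrix_inv F ** G = G ** matrix_inv F ** V"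
    and comm2: "V ** matrix_inv Fb ** Gb = Gb ** matrix_inv Fb ** V"
    and hi: "\<forall>t::nat. 0 < t \<longrightarrow>
       K_nonneg K
        ((matpow (Gb ** matrix_inv Fb) t
           + (\<Sum>j<t. matpow (Gb ** matrix_inv Fb) j ** V ** matrix_inv Fb))
         ** matrix_inv (\<Sum>j<t. matpow (matrix_inv Fb ** Gb) j ** matrix_inv Fb))"
    and hii: "K_ge K (matrix_inv F) (matrix_inv Fb)"
    and hiii: "K_nonneg K (matrix_inv Fb ** Gb)"
    and s: "0 < s"
  shows "spectral_radius
           (matpow (matrix_inv F ** G) s
             + (\<Sum>j<s. matpow (matrix_inv F ** G) j ** matrix_inv F ** V))
         \<le> spectral_radius
           (matpow (matrix_inv Fb ** Gb) s
             + (\<Sum>j<s. matpow (matrix_inv Fb ** Gb) j ** matrix_inv Fb ** V))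
       \<and> spectral_radius
           (matpow (matrix_inv Fb ** Gb) s
             + (\<Sum>j<s. matpow (matrix_inv Fb ** Gb) j ** matrix_inv Fb ** V)) < 1"
proof -
  define I :: "real^'n^'n" where "I = mat 1"
  define Fi where "Fi = matrix_inv F"
  define Fbi where "Fbi = matrix_inv Fb"
  define Ui where "Ui = matrix_inv U"
  define Ai where "Ai = matrix_inv A"
  define H where "H = Fi ** G"
  define Hh where "Hh = G ** Fi"
  define Hb where "Hb = Fbi ** Gb"
  define Hbh where "Hbh = Gb ** Fbi"
  define S where "S = (\<lambda>m. \<Sum>j<m. matpow H j ** Fi)"
  define Sb where "Sb = (\<lambda>m. \<Sum>j<m. matpow Hb j ** Fbi)"
  define T where "T = matpow H s + (\<Sum>j<s. matpow H j ** Fi ** V)"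
  define Tb where "Tb = matpow Hb s + (\<Sum>j<s. matpow Hb j ** Fbi ** V)"
  define X1 where "X1 = I - A ** S s"
  have UFG: "U = F - G" and invF: "invertible F" and nnFi: "K_nonneg K Fi" and nnHh: "K_nonneg K Hh"
    using wFG unfolding K_weak_regular_splitting_II_def Fi_def Hh_def by auto
  have UFGb: "U = Fb - Gb" and invFb: "invertible Fb" and nnFbi: "K_nonneg K Fbi" and nnHbh: "K_nonneg K Hbh"
    using wFGb unfolding K_weak_regular_splitting_II_def Fbi_def Hbh_def by auto
  have AUV: "A = U - V" and invU: "invertible U" and nnUi: "K_nonneg K Ui" and nnV: "K_nonneg K V"
    using regUV unfolding K_regular_splitting_def Ui_def by auto
  have invA: "invertible A" and nnAi: "K_nonneg K Ai" using Amon unfolding K_monotone_def Ai_def by auto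
  have nnHb: "K_nonneg K Hb" using hiii unfolding Hb_def Fbi_def .
  have nnD: "K_nonneg K (Fi - Fbi)" using hii unfolding K_ge_def Fi_def Fbi_def .
  note iF = inv_props[OF invF, folded Fi_def I_def]
  note iFb = inv_props[OF invFb, folded Fbi_def I_def]
  note iU = inv_props[OF invU, folded Ui_def I_def]
  note iA = inv_props[OF invA, folded Ai_def I_def]
  have FiU: "Fi ** U = I - H" unfolding UFG H_def by (simp add: mm_diff_l iF)
  have UFi: "U ** Fi = I - Hh" unfolding UFG Hh_def by (simp add: mm_diff_r iF)
  have FbiU: "Fbi ** U = I - Hb" unfolding UFGb Hb_def by (simp add: mm_diff_l iFb)
  have UFbi: "U ** Fbi = I - Hbh" unfolding UFGb Hbh_def by (simp add: mm_diff_r iFb)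
  have shH: "matpow H j ** Fi = Fi ** matpow Hh j" for j
    by (rule matpow_intertwine) (simp add: H_def Hh_def matrix_mul_assoc)
  have shHb: "matpow Hb j ** Fbi = Fbi ** matpow Hbh j" for j
    by (rule matpow_intertwine) (simp add: Hb_def Hbh_def matrix_mul_assoc)
  have SU: "S m ** U = I - matpow H m" for m
  proof -
    have "S m ** U = (\<Sum>j<m. matpow H j ** (I - H))"
      unfolding S_def mm_sum_r by (simp add: matrix_mul_assoc[symmetric] FiU)
    then show ?thesis using tele_r[of H m] by (simp add: I_def)
  qed
  have US: "U ** S m = I - matpow Hh m" for m
  proof -
    have "U ** S m = (\<Sum>j<m. (I - Hh) ** matpow Hh j)"
      unfolding S_def mm_sum_l by (simp add: shH matrix_mul_assoc UFi)
    then show ?thesis using tele_l[of Hh m] by (simp add: I_def)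
  qed
  have SbU: "Sb m ** U = I - matpow Hb m" for m
  proof -
    have "Sb m ** U = (\<Sum>j<m. matpow Hb j ** (I - Hb))"
      unfolding Sb_def mm_sum_r by (simp add: matrix_mul_assoc[symmetric] FbiU)
    then show ?thesis using tele_r[of Hb m] by (simp add: I_def)
  qed
  have USb: "U ** Sb m = I - matpow Hbh m" for m
  proof -
    have "U ** Sb m = (\<Sum>j<m. (I - Hbh) ** matpow Hbh j)"
      unfolding Sb_def mm_sum_l by (simp add: shHb matrix_mul_assoc UFbi)
    then show ?thesis using tele_l[of Hbh m] by (simp add: I_def)
  qed
  have nnS: "K_nonneg K (S m)" for m
    unfolding S_def by (intro nn_sum[OF K]) (auto simp: shH intro!: nn_mult nnFi nn_matpow nnHh)
  have nnSb: "K_nonneg K (Sb m)" for m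
    unfolding Sb_def by (intro nn_sum[OF K]) (auto intro!: nn_mult nnFbi nn_matpow nnHb)
  have TSA: "T = I - S s ** A"
  proof -
    have "(\<Sum>j<s. matpow H j ** Fi ** V) = S s ** V" unfolding S_def mm_sum_r ..
    moreover have "S s ** A = I - matpow H s - S s ** V" unfolding AUV by (simp add: mm_diff_l SU)
    ultimately show ?thesis unfolding T_def by simp
  qed
  have TbSA: "Tb = I - Sb s ** A"
  proof -
    have "(\<Sum>j<s. matpow Hb j ** Fbi ** V) = Sb s ** V" unfolding Sb_def mm_sum_r ..
    moreover have "Sb s ** A = I - matpow Hb s - Sb s ** V" unfolding AUV by (simp add: mm_diff_l SbU)
    ultimately show ?thesis unfolding Tb_def by simp
  qed
  have X1eq: "X1 = matpow Hh s + V ** S s"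
    unfolding X1_def AUV by (simp add: mm_diff_r US)
  have nnX1: "K_nonneg K X1"
  proof -
    have "V ** S s = (\<Sum>j<s. V ** (Fi ** matpow Hh j))" unfolding S_def mm_sum_l by (simp add: shH)
    moreover have "K_nonneg K (\<Sum>j<s. V ** (Fi ** matpow Hh j))"
      by (intro nn_sum[OF K]) (auto intro!: nn_mult nnV nnFi nn_matpow nnHh)
    ultimately show ?thesis unfolding X1eq by (simp add: nn_add[OF K] nn_matpow[OF nnHh])
  qed
  have ATX: "A ** T = X1 ** A"
    unfolding TSA X1_def by (simp add: mm_diff_l mm_diff_r matrix_mul_assoc I_def)
  have decHb: "(\<lambda>k. matpow Hb k *v y) \<longlonglongrightarrow> 0" for y
  proof (rule decay[OF K nnHb nnFbi, where B=Ui and W=Gb])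
    fix m
    have "Sb m = Sb m ** U ** Ui" by (simp add: matrix_mul_assoc[symmetric] iU I_def)
    also have "\<dots> = Ui - matpow Hb m ** Ui" by (simp add: SbU mm_diff_r I_def)
    finally have "Ui - Sb m = matpow Hb m ** Ui" by simp
    moreover have "(\<Sum>k<m. matpow Hb k ** Fbi) = Sb m" by (simp add: Sb_def)
    ultimately show "K_nonneg K (Ui - (\<Sum>k<m. matpow Hb k ** Fbi))"
      using nn_mult[OF nn_matpow[OF nnHb] nnUi] by simp
  qed (simp add: Hb_def)
  have invIH: "invertible (I - matpow Hb s)"
  proof (rule inv_of_inj)
    fix v assume "(I - matpow Hb s) *v v = 0"
    then have fix1: "matpow Hb s *v v = v" by (simp add: matrix_vector_mult_diff_rdistrib I_def)
    have fixm: "matpow Hb (s * m) *v v = v" for m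
    proof (induction m)
      case 0 then show ?case by simp
    next
      case (Suc m)
      have "matpow Hb (s * Suc m) *v v = matpow Hb s *v (matpow Hb (s * m) *v v)"
        by (simp add: matpow_add matrix_vector_mul_assoc)
      then show ?case using Suc fix1 by simp
    qed
    have "strict_mono (\<lambda>m. s * m)" using s by (simp add: strict_mono_def)
    then have "(\<lambda>m. matpow Hb (s * m) *v v) \<longlonglongrightarrow> 0"
      using LIMSEQ_subseq_LIMSEQ[OF decHb[of v]] by (simp add: o_def)
    then have "(\<lambda>m. v) \<longlonglongrightarrow> 0" using fixm by simp
    then show "v = 0" using LIMSEQ_const_iff by blast
  qed
  have invUi: "invertible Ui" unfolding invertible_def using iU unfolding I_def by blast
  have Sbfac: "Sb s = (I - matpow Hb s) ** Ui"
  proof -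
    have "Sb s = Sb s ** U ** Ui" by (simp add: matrix_mul_assoc[symmetric] iU I_def)
    then show ?thesis by (simp add: SbU)
  qed
  have invSb: "invertible (Sb s)" unfolding Sbfac by (rule invertible_mult[OF invIH invUi])
  define Sbi where "Sbi = matrix_inv (Sb s)"
  note iSb = inv_props[OF invSb, folded Sbi_def I_def]
  have VFcomm: "(V ** Fbi) ** Hbh = Hbh ** (V ** Fbi)"
  proof -
    have c2: "(V ** Fbi) ** Gb = (Gb ** Fbi) ** V" using comm2 unfolding Fbi_def .
    have "(V ** Fbi) ** Hbh = ((V ** Fbi) ** Gb) ** Fbi" unfolding Hbh_def by (rule matrix_mul_assoc)
    also have "\<dots> = ((Gb ** Fbi) ** V) ** Fbi" unfolding c2 ..
    also have "\<dots> = Hbh ** (V ** Fbi)" unfolding Hbh_def by (simp only: matrix_mul_assoc)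
    finally show ?thesis .
  qed
  have VSb: "V ** Sb s = (\<Sum>j<s. matpow Hbh j ** V ** Fbi)"
  proof -
    have "V ** Sb s = (\<Sum>j<s. V ** (matpow Hb j ** Fbi))" unfolding Sb_def mm_sum_l ..
    also have "\<dots> = (\<Sum>j<s. matpow Hbh j ** V ** Fbi)"
    proof (rule sum.cong)
      fix j
      have "V ** (matpow Hb j ** Fbi) = V ** (Fbi ** matpow Hbh j)" by (simp only: shHb)
      also have "\<dots> = (V ** Fbi) ** matpow Hbh j" by (rule matrix_mul_assoc)
      also have "\<dots> = matpow Hbh j ** (V ** Fbi)" by (rule matpow_intertwine[OF VFcomm[symmetric], symmetric])
      also have "\<dots> = matpow Hbh j ** V ** Fbi" by (rule matrix_mul_assoc)
      finally show "V ** (matpow Hb j ** Fbi) = matpow Hbh j ** V ** Fbi" .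
    qed simp
    finally show ?thesis .
  qed
  have Yeq: "matpow Hbh s + (\<Sum>j<s. matpow Hbh j ** V ** Fbi) = I - A ** Sb s"
  proof -
    have "A ** Sb s = U ** Sb s - V ** Sb s" unfolding AUV by (rule mm_diff_r)
    then have "A ** Sb s = I - matpow Hbh s - (\<Sum>j<s. matpow Hbh j ** V ** Fbi)"
      by (simp only: USb VSb)
    then show ?thesis by simp
  qed
  have hs: "K_nonneg K ((matpow Hbh s + (\<Sum>j<s. matpow Hbh j ** V ** Fbi))
          ** matrix_inv (\<Sum>j<s. matpow Hb j ** Fbi))"
    using hi[rule_format, OF s] by (simp only: Hbh_def Hb_def Fbi_def)
  have "(\<Sum>j<s. matpow Hb j ** Fbi) = Sb s" by (simp only: Sb_def)
  then have "K_nonneg K ((I - A ** Sb s) ** Sbi)"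
    using hs unfolding Yeq Sbi_def by simp
  then have nnN: "K_nonneg K (Sbi - A)"
  proof -
    have "(I - A ** Sb s) ** Sbi = Sbi - A ** (Sb s ** Sbi)" by (simp only: mm_diff_r I_def matrix_mul_lid matrix_mul_assoc)
    also have "\<dots> = Sbi - A" by (simp only: iSb I_def matrix_mul_rid)
    finally show ?thesis using \<open>K_nonneg K ((I - A ** Sb s) ** Sbi)\<close> by simp
  qed
  have TbN: "Tb = Sb s ** (Sbi - A)" unfolding TbSA by (simp add: mm_diff_l iSb)
  have nnTb: "K_nonneg K Tb" unfolding TbN by (rule nn_mult[OF nnSb nnN])
  have decTb: "(\<lambda>k. matpow Tb k *v y) \<longlonglongrightarrow> 0" for y
  proof (rule decay[OF K nnTb nnSb, where B=Ai and W="Sbi - A"])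
    fix m
    have "(\<Sum>k<m. matpow Tb k ** Sb s) ** A = (\<Sum>k<m. matpow Tb k ** (I - Tb))"
      unfolding mm_sum_r by (simp add: matrix_mul_assoc[symmetric] TbSA I_def)
    also have "\<dots> = I - matpow Tb m" using tele_r[of Tb m] by (simp add: I_def)
    finally have e: "(\<Sum>k<m. matpow Tb k ** Sb s) ** A = I - matpow Tb m" .
    have "(\<Sum>k<m. matpow Tb k ** Sb s) = (\<Sum>k<m. matpow Tb k ** Sb s) ** A ** Ai"
      by (simp add: matrix_mul_assoc[symmetric] iA I_def)
    also have "\<dots> = Ai - matpow Tb m ** Ai" unfolding e by (simp add: mm_diff_r I_def)
    finally have "Ai - (\<Sum>k<m. matpow Tb k ** Sb s) = matpow Tb m ** Ai" by simp
    then show "K_nonneg K (Ai - (\<Sum>k<m. matpow Tb k ** Sb s))"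
      using nn_mult[OF nn_matpow[OF nnTb] nnAi] by simp
  qed (rule TbN)
  have g2: "spectral_radius Tb < 1"
  proof (rule sr_less)
    fix c assume c: "c \<in> eigenvalues_C Tb"
    show "cmod c < 1" by (rule decay_ev[where \<mu>=1, OF _ _ c]) (use decTb in simp_all)
  qed
  have E: "K_nonneg K (S m - Sb m)" for m
  proof (induction m)
    case 0 then show ?case by (simp add: S_def Sb_def nn_zero[OF K])
  next
    case (Suc m)
    have HS: "H ** S m = S m - Fi + Fi ** matpow Hh m"
    proof -
      have "H = I - Fi ** U" using FiU by simp
      then have "H ** S m = S m - Fi ** (U ** S m)" by (simp add: mm_diff_r matrix_mul_assoc I_def)
      then show ?thesis by (simp add: US mm_diff_l I_def)
    qed
    have HbS: "Hb ** S m = S m - Fbi + Fbi ** matpow Hh m"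
    proof -
      have "Hb = I - Fbi ** U" using FbiU by simp
      then have "Hb ** S m = S m - Fbi ** (U ** S m)" by (simp add: mm_diff_r matrix_mul_assoc I_def)
      then show ?thesis by (simp add: US mm_diff_l I_def)
    qed
    have SS: "S (Suc m) = Fi + H ** S m"
    proof -
      have "S (Suc m) = matpow H 0 ** Fi + (\<Sum>j<m. matpow H (Suc j) ** Fi)"
        unfolding S_def by (rule sum.lessThan_Suc_shift)
      also have "(\<Sum>j<m. matpow H (Suc j) ** Fi) = H ** S m"
        unfolding S_def mm_sum_l by (simp add: matpow_comm matrix_mul_assoc)
      finally show ?thesis by simp
    qed
    have SbS: "Sb (Suc m) = Fbi + Hb ** Sb m"
    proof -
      have "Sb (Suc m) = matpow Hb 0 ** Fbi + (\<Sum>j<m. matpow Hb (Suc j) ** Fbi)"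
        unfolding Sb_def by (rule sum.lessThan_Suc_shift)
      also have "(\<Sum>j<m. matpow Hb (Suc j) ** Fbi) = Hb ** Sb m"
        unfolding Sb_def mm_sum_l by (simp add: matpow_comm matrix_mul_assoc)
      finally show ?thesis by simp
    qed
    have "S (Suc m) - Sb (Suc m) = Hb ** (S m - Sb m) + (Fi - Fbi) ** matpow Hh m"
      unfolding SS SbS HS mm_diff_l mm_diff_r HbS by (simp add: algebra_simps)
    moreover have "K_nonneg K (Hb ** (S m - Sb m) + (Fi - Fbi) ** matpow Hh m)"
      using Suc by (intro nn_add[OF K] nn_mult nnHb nnD nn_matpow nnHh)
    ultimately show ?case by simp
  qed
  have TA: "Tb ** Ai = Ai - Sb s"
    unfolding TbSA by (simp add: mm_diff_r matrix_mul_assoc[symmetric] iA I_def)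
  have AX: "Ai ** X1 = Ai - S s"
    unfolding X1_def by (simp add: mm_diff_l matrix_mul_assoc iA I_def)
  have TAX: "Tb ** Ai - Ai ** X1 = S s - Sb s" unfolding TA AX by simp
  have sand: "K_nonneg K (Ai ** matpow X1 k) \<and> K_nonneg K (matpow Tb k ** Ai - Ai ** matpow X1 k)" for k
  proof (induction k)
    case 0 then show ?case by (simp add: nnAi nn_zero[OF K])
  next
    case (Suc k)
    have "matpow Tb (Suc k) ** Ai - Ai ** matpow X1 (Suc k)
        = (matpow Tb k ** Ai - Ai ** matpow X1 k) ** X1 + matpow Tb k ** (Tb ** Ai - Ai ** X1)"
      by (simp add: mm_diff_l mm_diff_r matrix_mul_assoc)
    moreover have "K_nonneg K ((matpow Tb k ** Ai - Ai ** matpow X1 k) ** X1 + matpow Tb k ** (Tb ** Ai - Ai ** X1))"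
      using Suc E[of s] unfolding TAX by (intro nn_add[OF K] nn_mult nnX1 nn_matpow nnTb) auto
    moreover have "K_nonneg K (Ai ** matpow X1 (Suc k))"
      using Suc nnX1 by (simp add: matrix_mul_assoc nn_mult)
    ultimately show ?case by simp
  qed
  have eigX1: "cmod c \<le> spectral_radius Tb" if c: "c \<in> eigenvalues_C X1" for c
  proof (rule ccontr)
    assume "\<not> cmod c \<le> spectral_radius Tb"
    then have lt: "spectral_radius Tb < cmod c" by simp
    define \<mu> where "\<mu> = cmod c"
    have mu: "0 < \<mu>" using lt sr_nonneg[of Tb] unfolding \<mu>_def by linarith
    have decX: "(\<lambda>k. ((1 / \<mu> ^ k) *\<^sub>R matpow X1 k) *v y) \<longlonglongrightarrow> 0" for y
    proof (rule pc_lift[OF K])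
      fix x assume x: "x \<in> K"
      define p where "p = (\<lambda>k. (1 / \<mu> ^ k) *\<^sub>R ((Ai ** matpow X1 k) *v x))"
      define q where "q = (\<lambda>k. (1 / \<mu> ^ k) *\<^sub>R (matpow Tb k *v (Ai *v x)))"
      have q0: "q \<longlonglongrightarrow> 0" unfolding q_def by (rule gelfand) (simp add: lt \<mu>_def)
      have pK: "p k \<in> K" for k
        unfolding p_def using sand[of k] x mu by (intro pc_scale[OF K]) (auto simp: K_nonneg_def)
      have qp: "q k - p k \<in> K" for k
      proof -
        have "q k - p k = (1 / \<mu> ^ k) *\<^sub>R ((matpow Tb k ** Ai - Ai ** matpow X1 k) *v x)"
          unfolding p_def q_def by (simp add: matrix_vector_mult_diff_rdistrib matrix_vector_mul_assoc scaleR_diff_right)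
        then show ?thesis using sand[of k] x mu by (simp add: K_nonneg_def pc_scale[OF K])
      qed
      have p0: "p \<longlonglongrightarrow> 0" by (rule pc_sandwich[OF K pK qp q0])
      have "(\<lambda>k. A *v p k) \<longlonglongrightarrow> A *v 0"
        by (rule bounded_linear.tendsto[OF matrix_vector_mul_bounded_linear p0])
      moreover have "A *v p k = ((1 / \<mu> ^ k) *\<^sub>R matpow X1 k) *v x" for k
      proof -
        have "A *v p k = (1 / \<mu> ^ k) *\<^sub>R (A *v ((Ai ** matpow X1 k) *v x))"
          unfolding p_def by (rule matrix_vector_mult_scaleR)
        also have "A *v ((Ai ** matpow X1 k) *v x) = matpow X1 k *v x"
          by (simp add: matrix_vector_mul_assoc matrix_mul_assoc iA I_def)
        also have "(1 / \<mu> ^ k) *\<^sub>R (matpow X1 k *v x) = ((1 / \<mu> ^ k) *\<^sub>R matpow X1 k) *v x"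
          by (rule scaleR_matrix_vector_assoc)
        finally show ?thesis .
      qed
      ultimately show "(\<lambda>k. ((1 / \<mu> ^ k) *\<^sub>R matpow X1 k) *v x) \<longlonglongrightarrow> 0" by simp
    qed
    have "cmod c < \<mu>"
      by (rule decay_ev[OF mu _ c]) (use decX in \<open>simp add: scaleR_matrix_vector_assoc\<close>)
    then show False unfolding \<mu>_def by simp
  qed
  have g1: "spectral_radius T \<le> spectral_radius Tb"
  proof (rule sr_le)
    fix c assume "c \<in> eigenvalues_C T"
    then have "c \<in> eigenvalues_C X1" using eig_similar[OF invA ATX] by blast
    then show "cmod c \<le> spectral_radius Tb" by (rule eigX1)
  qed
  show ?thesis using g1 g2 unfolding T_def Tb_def H_def Hb_def Fi_def Fbi_def by simp
qed


end
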